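(* The group of units (invertible elements) of the monoid $SB_n$ is equal to the image of the braid group $Br_n$ in $SB_n$, i.e. to the submonoid of $SB_n$ generated by $\sigma_1^{\pm1},\dots,\sigma_{n-1}^{\pm1}$.
   Context: Fix $n\ge 2$. $SB_n$ is the monoid with generators $\sigma_i,\sigma_i^{-1},x_i$ ($i=1,\dots,n-1$) and relations: $\sigma_i\sigma_j=\sigma_j\sigma_i$ and $x_ix_j=x_jx_i$ if $|i-j|>1$; $x_i\sigma_j=\sigma_jx_i$ if $|i-j|\ne1$; $\sigma_i\sigma_{i+1}\sigma_i=\sigma_{i+1}\sigma_i\sigma_{i+1}$; $\sigma_i\sigma_{i+1}x_i=x_{i+1}\sigma_i\sigma_{i+1}$; $\sigma_{i+1}\sigma_ix_{i+1}=x_i\sigma_{i+1}\sigma_i$; $\sigma_i\sigma_i^{-1}=\sigma_i^{-1}\sigma_i=1$. The braid group $Br_n$ (generators $\sigma_i$, Artin relations) maps to $SB_n$ by $\sigma_i\mapsto\sigma_i$. *)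

theory Defs
  imports Main
begin

text \<open>Generators of SB_n: Sg i = sigma_i, Sgi i = sigma_i^{-1}, Xg i = x_i,
  for 1 <= i <= n-1. Elements of SB_n are words modulo the congruence
  generated by the defining relations.\<close>

datatype gen = Sg nat | Sgi nat | Xg nat

type_synonym word = "gen list"

fun gidx :: "gen \<Rightarrow> nat" where
  "gidx (Sg i) = i" | "gidx (Sgi i) = i" | "gidx (Xg i) = i"

definition valid_word :: "nat \<Rightarrow> word \<Rightarrow> bool" where
  "valid_word n w \<longleftrightarrow> (\<forall>a\<in>set w. 1 \<le> gidx a \<and> gidx a \<le> n - 1)"

definition braid_word :: "word \<Rightarrow> bool" where
  "braid_word w \<longleftrightarrow> (\<forall>a\<in>set w. \<exists>i. a = Sg i \<or> a = Sgi i)"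

definition ok :: "nat \<Rightarrow> nat \<Rightarrow> bool" where
  "ok n i \<longleftrightarrow> 1 \<le> i \<and> i \<le> n - 1"

inductive sb_rel :: "nat \<Rightarrow> word \<Rightarrow> word \<Rightarrow> bool" for n where
  ss_comm: "\<lbrakk>ok n i; ok n j; i + 1 < j \<or> j + 1 < i\<rbrakk> \<Longrightarrow> sb_rel n [Sg i, Sg j] [Sg j, Sg i]"
| xx_comm: "\<lbrakk>ok n i; ok n j; i + 1 < j \<or> j + 1 < i\<rbrakk> \<Longrightarrow> sb_rel n [Xg i, Xg j] [Xg j, Xg i]"
| xs_comm: "\<lbrakk>ok n i; ok n j; i \<noteq> j + 1; j \<noteq> i + 1\<rbrakk> \<Longrightarrow> sb_rel n [Xg i, Sg j] [Sg j, Xg i]"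
| braid: "\<lbrakk>ok n i; ok n (i + 1)\<rbrakk> \<Longrightarrow> sb_rel n [Sg i, Sg (i+1), Sg i] [Sg (i+1), Sg i, Sg (i+1)]"
| mixed1: "\<lbrakk>ok n i; ok n (i + 1)\<rbrakk> \<Longrightarrow> sb_rel n [Sg i, Sg (i+1), Xg i] [Xg (i+1), Sg i, Sg (i+1)]"
| mixed2: "\<lbrakk>ok n i; ok n (i + 1)\<rbrakk> \<Longrightarrow> sb_rel n [Sg (i+1), Sg i, Xg (i+1)] [Xg i, Sg (i+1), Sg i]"
| inv1: "ok n i \<Longrightarrow> sb_rel n [Sg i, Sgi i] []"
| inv2: "ok n i \<Longrightarrow> sb_rel n [Sgi i, Sg i] []"

inductive sb_eq :: "nat \<Rightarrow> word \<Rightarrow> word \<Rightarrow> bool" for n where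
  step: "sb_rel n l r \<Longrightarrow> sb_eq n (u @ l @ v) (u @ r @ v)"
| refl: "sb_eq n w w"
| sym: "sb_eq n w v \<Longrightarrow> sb_eq n v w"
| trans: "sb_eq n u v \<Longrightarrow> sb_eq n v w \<Longrightarrow> sb_eq n u w"

definition sb_unit :: "nat \<Rightarrow> word \<Rightarrow> bool" where
  "sb_unit n w \<longleftrightarrow> (\<exists>v. valid_word n v \<and> sb_eq n (w @ v) [] \<and> sb_eq n (v @ w) [])"

end

theory Submission
  imports Defs
begin

fun xc :: "word \<Rightarrow> nat" where
  "xc [] = 0" | "xc (Xg i # w) = Suc (xc w)" | "xc (Sg i # w) = xc w" | "xc (Sgi i # w) = xc w"

lemma xc_app[simp]: "xc (a @ b) = xc a + xc b"
  by (induction a rule: xc.induct) auto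

lemma xc_rel: "sb_rel n l r \<Longrightarrow> xc l = xc r"
  by (induction rule: sb_rel.induct) auto

lemma xc_eq: "sb_eq n a b \<Longrightarrow> xc a = xc b"
  by (induction rule: sb_eq.induct) (auto dest: xc_rel)

lemma xc0_braid: "xc w = 0 \<Longrightarrow> braid_word w"
  unfolding braid_word_def
proof (induction w rule: xc.induct)
qed auto

lemma cong: "sb_eq n x y \<Longrightarrow> sb_eq n (p @ x @ q) (p @ y @ q)"
proof (induction rule: sb_eq.induct)
  case (step l r u v)
  have "sb_eq n ((p @ u) @ l @ (v @ q)) ((p @ u) @ r @ (v @ q))"
    by (rule sb_eq.step[OF step])
  then show ?case by simp
qed (auto intro: sb_eq.refl sb_eq.sym sb_eq.trans)

fun binv :: "gen \<Rightarrow> gen" where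
  "binv (Sg i) = Sgi i" | "binv (Sgi i) = Sg i" | "binv (Xg i) = Xg i"

definition winv :: "word \<Rightarrow> word" where "winv u = rev (map binv u)"

lemma pair_cancel:
  assumes "ok n (gidx a)" "\<exists>i. a = Sg i \<or> a = Sgi i"
  shows "sb_eq n [a, binv a] []" "sb_eq n [binv a, a] []"
proof -
  obtain i where a: "a = Sg i \<or> a = Sgi i" using assms(2) by blast
  have oki: "ok n i" using assms(1) a by auto
  have r1: "sb_eq n [Sg i, Sgi i] []"
    using sb_eq.step[OF sb_rel.inv1[OF oki], of "[]" "[]"] by simp
  have r2: "sb_eq n [Sgi i, Sg i] []"
    using sb_eq.step[OF sb_rel.inv2[OF oki], of "[]" "[]"] by simp
  show "sb_eq n [a, binv a] []" "sb_eq n [binv a, a] []" using a r1 r2 by auto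
qed

lemma inv_cancel:
  assumes "valid_word n u" "braid_word u"
  shows "sb_eq n (u @ winv u) [] \<and> sb_eq n (winv u @ u) []"
  using assms
proof (induction u)
  case Nil
  then show ?case by (simp add: winv_def sb_eq.refl)
next
  case (Cons a u)
  have vu: "valid_word n u" "braid_word u" using Cons.prems
    by (auto simp: valid_word_def braid_word_def)
  have oka: "ok n (gidx a)" and ba: "\<exists>i. a = Sg i \<or> a = Sgi i" using Cons.prems
    by (auto simp: valid_word_def braid_word_def ok_def)
  note IH = Cons.IH[OF vu]
  note pc = pair_cancel[OF oka ba]
  have e1: "(a # u) @ winv (a # u) = [a] @ (u @ winv u) @ [binv a]"
    by (simp add: winv_def)
  have "sb_eq n ([a] @ (u @ winv u) @ [binv a]) ([a] @ [] @ [binv a])"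
    using cong IH by blast
  then have A: "sb_eq n ((a # u) @ winv (a # u)) []"
    using pc(1) e1 by (auto intro: sb_eq.trans)
  have e2: "winv (a # u) @ (a # u) = winv u @ [binv a, a] @ u"
    by (simp add: winv_def)
  have "sb_eq n (winv u @ [binv a, a] @ u) (winv u @ [] @ u)"
    using cong pc(2) by blast
  then have B: "sb_eq n (winv (a # u) @ (a # u)) []"
    using IH e2 by (auto intro: sb_eq.trans)
  show ?case using A B by simp
qed

theorem proposition3p1:
  fixes n :: nat and w :: word
  assumes "n \<ge> 2" and "valid_word n w"
  shows "sb_unit n w \<longleftrightarrow> (\<exists>u. valid_word n u \<and> braid_word u \<and> sb_eq n w u)"
proof
  assume "sb_unit n w"
  then obtain v where "sb_eq n (w @ v) []" unfolding sb_unit_def by blast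
  then have "xc w = 0" using xc_eq by fastforce
  then have "braid_word w" by (rule xc0_braid)
  then show "\<exists>u. valid_word n u \<and> braid_word u \<and> sb_eq n w u"
    using assms(2) sb_eq.refl by blast
next
  assume "\<exists>u. valid_word n u \<and> braid_word u \<and> sb_eq n w u"
  then obtain u where u: "valid_word n u" "braid_word u" "sb_eq n w u" by blast
  have vi: "valid_word n (winv u)"
  proof -
    have "gidx (binv a) = gidx a" for a by (cases a) auto
    then show ?thesis using u(1) by (auto simp: valid_word_def winv_def)
  qed
  note c = inv_cancel[OF u(1,2)]
  have "sb_eq n (w @ winv u) (u @ winv u)"
    using cong[OF u(3), of "[]" "winv u"] by simp
  then have 1: "sb_eq n (w @ winv u) []" using c by (auto intro: sb_eq.trans)
  have "sb_eq n (winv u @ w) (winv u @ u)"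
    using cong[OF u(3), of "winv u" "[]"] by simp
  then have 2: "sb_eq n (winv u @ w) []" using c by (auto intro: sb_eq.trans)
  show "sb_unit n w" unfolding sb_unit_def using vi 1 2 by blast
qed

end
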